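(* Let $R$ be a ring with identity, $(S,\leq)$ a strictly ordered monoid which is quasitotally ordered, and $\omega:S\to\mathrm{End}(R)$ a monoid homomorphism. Assume $R$ is $S$-compatible and $(S,\omega)$-Armendariz, and let $A=R[[S,\omega]]$. (1) If $R$ is a generalized right Baer ring, then $A$ is a generalized right Baer ring. (2) If $R$ is a generalized right quasi-Baer ring, then $A$ is a generalized right quasi-Baer ring.
   Context: All rings are associative with identity. For a nonempty subset $X$ of a ring $R$, $r_R(X)=\{a\in R : xa=0 \text{ for all } x\in X\}$ is its right annihilator, and for a positive integer $n$, $X^n$ denotes the set of all products $a_1a_2\cdots a_n$ with $a_i\in X$ for $1\le i\le n$. A ring $R$ is generalized right Baer if for every nonempty subset $X$ of $R$ there exist a positive integer $n$ (depending on $X$) and an idempotent $e\in R$ with $r_R(X^n)=eR$. A ring $R$ is generalized right quasi-Baer if for every right ideal $I$ of $R$ there exist a positive integer $n$ (depending on $I$) and an idempotent $e\in R$ with $r_R(I^n)=eR$. An ordered monoid $(S,\leq)$ is a monoid with a partial order such that $u\le v$ implies $ut\le vt$ and $tu\le tv$ for all $t\in S$; it is strictly ordered if $u<v$ implies $ut<vt$ and $tu<tv$ for all $t\in S$. It is quasitotally ordered if $\leq$ can be refined to an order $\preceq$ with respect to which $S$ is a strictly totally ordered monoid. A subset of $S$ is artinian if every strictly decreasing sequence in it is finite, and narrow if every subset of pairwise incomparable elements is finite. Given a ring $R$, a strictly ordered monoid $(S,\le)$ and a monoid homomorphism $\omega:S\to\mathrm{End}(R)$, $s\mapsto\omega_s$,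 the ring of skew generalized power series $R[[S,\omega]]$ is the set of all maps $f:S\to R$ whose support $\mathrm{supp}(f)=\{s\in S: f(s)\neq 0\}$ is artinian and narrow, with pointwise addition and multiplication $(fg)(s)=\sum_{(u,v)\in X_s(f,g)} f(u)\,\omega_u(g(v))$, where $X_s(f,g)=\{(u,v)\in S\times S: uv=s,\ f(u)\ne0,\ g(v)\ne0\}$ (a finite set; an empty sum is $0$). An endomorphism $\sigma$ of $R$ is compatible if for all $a,b\in R$: $ab=0 \iff a\sigma(b)=0$. $R$ is $S$-compatible if $\omega_s$ is compatible for every $s\in S$. $R$ is $(S,\omega)$-Armendariz if whenever $f,g\in R[[S,\omega]]$ satisfy $fg=0$, then $f(s)\,\omega_s(g(t))=0$ for all $s,t\in S$. *)

theory Defs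
  imports Main
begin

definition rann :: "'r set \<Rightarrow> ('r \<Rightarrow> 'r \<Rightarrow> 'r) \<Rightarrow> 'r \<Rightarrow> 'r set \<Rightarrow> 'r set" where
  "rann C mult zero X = {a \<in> C. \<forall>x\<in>X. mult x a = zero}"

fun setpow :: "('r \<Rightarrow> 'r \<Rightarrow> 'r) \<Rightarrow> 'r set \<Rightarrow> nat \<Rightarrow> 'r set" where
  "setpow mult X 0 = {}"
| "setpow mult X (Suc 0) = X"
| "setpow mult X (Suc (Suc n)) = {mult x y | x y. x \<in> X \<and> y \<in> setpow mult X (Suc n)}"

definition right_ideal_in ::
  "'r set \<Rightarrow> ('r \<Rightarrow> 'r \<Rightarrow> 'r) \<Rightarrow> ('r \<Rightarrow> 'r) \<Rightarrow> ('r \<Rightarrow> 'r \<Rightarrow> 'r) \<Rightarrow> 'r \<Rightarrow> 'r set \<Rightarrow> bool" where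
  "right_ideal_in C add neg mult zero I \<longleftrightarrow>
     I \<subseteq> C \<and> zero \<in> I \<and> (\<forall>x\<in>I. \<forall>y\<in>I. add x y \<in> I) \<and> (\<forall>x\<in>I. neg x \<in> I)
     \<and> (\<forall>x\<in>I. \<forall>r\<in>C. mult x r \<in> I)"

definition gen_right_Baer_in :: "'r set \<Rightarrow> ('r \<Rightarrow> 'r \<Rightarrow> 'r) \<Rightarrow> 'r \<Rightarrow> bool" where
  "gen_right_Baer_in C mult zero \<longleftrightarrow>
     (\<forall>X. X \<subseteq> C \<and> X \<noteq> {} \<longrightarrow>
        (\<exists>n>0. \<exists>e\<in>C. mult e e = e \<and>
           rann C mult zero (setpow mult X n) = {mult e a | a. a \<in> C}))"

definition gen_right_quasi_Baer_in ::
  "'r set \<Rightarrow> ('r \<Rightarrow> 'r \<Rightarrow> 'r) \<Rightarrow> ('r \<Rightarrow> 'r) \<Rightarrow> ('r \<Rightarrow> 'r \<Rightarrow> 'r) \<Rightarrow> 'r \<Rightarrow> bool" where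
  "gen_right_quasi_Baer_in C add neg mult zero \<longleftrightarrow>
     (\<forall>I. right_ideal_in C add neg mult zero I \<longrightarrow>
        (\<exists>n>0. \<exists>e\<in>C. mult e e = e \<and>
           rann C mult zero (setpow mult I n) = {mult e a | a. a \<in> C}))"

abbreviation gen_right_Baer :: "'a::ring_1 itself \<Rightarrow> bool" where
  "gen_right_Baer _ \<equiv> gen_right_Baer_in (UNIV::'a set) (*) 0"

abbreviation gen_right_quasi_Baer :: "'a::ring_1 itself \<Rightarrow> bool" where
  "gen_right_quasi_Baer _ \<equiv> gen_right_quasi_Baer_in (UNIV::'a set) (+) uminus (*) 0"

definition strictly_ordered_monoid_wrt :: "('b::monoid_mult \<Rightarrow> 'b \<Rightarrow> bool) \<Rightarrow> bool" where
  "strictly_ordered_monoid_wrt le \<longleftrightarrow>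
     (\<forall>x. le x x) \<and> (\<forall>x y z. le x y \<longrightarrow> le y z \<longrightarrow> le x z) \<and> (\<forall>x y. le x y \<longrightarrow> le y x \<longrightarrow> x = y)
     \<and> (\<forall>u v t. le u v \<longrightarrow> le (u * t) (v * t) \<and> le (t * u) (t * v))
     \<and> (\<forall>u v t. le u v \<and> u \<noteq> v \<longrightarrow> (le (u * t) (v * t) \<and> u * t \<noteq> v * t) \<and> (le (t * u) (t * v) \<and> t * u \<noteq> t * v))"

definition quasitotally_ordered :: "('b::monoid_mult \<Rightarrow> 'b \<Rightarrow> bool) \<Rightarrow> bool" where
  "quasitotally_ordered le \<longleftrightarrow>
     (\<exists>le'. strictly_ordered_monoid_wrt le' \<and> (\<forall>x y. le' x y \<or> le' y x)
        \<and> (\<forall>x y. le x y \<longrightarrow> le' x y))"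

definition artinian_set :: "'b::order set \<Rightarrow> bool" where
  "artinian_set X \<longleftrightarrow> \<not> (\<exists>g::nat \<Rightarrow> 'b. \<forall>n. g n \<in> X \<and> g (Suc n) < g n)"

definition narrow_set :: "'b::order set \<Rightarrow> bool" where
  "narrow_set X \<longleftrightarrow> (\<forall>Y \<subseteq> X. (\<forall>x\<in>Y. \<forall>y\<in>Y. x \<noteq> y \<longrightarrow> \<not> x \<le> y \<and> \<not> y \<le> x) \<longrightarrow> finite Y)"

definition supp :: "('b \<Rightarrow> 'a::zero) \<Rightarrow> 'b set" where
  "supp f = {s. f s \<noteq> 0}"

definition sgps :: "('b::order \<Rightarrow> 'a::zero) set" where
  "sgps = {f. artinian_set (supp f) \<and> narrow_set (supp f)}"

definition sgps_mult :: "('b::monoid_mult \<Rightarrow> 'a::ring_1 \<Rightarrow> 'a) \<Rightarrow> ('b \<Rightarrow> 'a) \<Rightarrow> ('b \<Rightarrow> 'a) \<Rightarrow> 'b \<Rightarrow> 'a" where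
  "sgps_mult \<omega> f g s = (\<Sum>(u, v) \<in> {(u, v). u * v = s \<and> f u \<noteq> 0 \<and> g v \<noteq> 0}. f u * \<omega> u (g v))"

definition ring_endo :: "('a::ring_1 \<Rightarrow> 'a) \<Rightarrow> bool" where
  "ring_endo \<sigma> \<longleftrightarrow> (\<forall>a b. \<sigma> (a + b) = \<sigma> a + \<sigma> b) \<and> (\<forall>a b. \<sigma> (a * b) = \<sigma> a * \<sigma> b) \<and> \<sigma> 1 = 1"

definition monoid_hom_to_End :: "('b::monoid_mult \<Rightarrow> 'a::ring_1 \<Rightarrow> 'a) \<Rightarrow> bool" where
  "monoid_hom_to_End \<omega> \<longleftrightarrow> (\<forall>s. ring_endo (\<omega> s)) \<and> \<omega> 1 = id \<and> (\<forall>s t. \<omega> (s * t) = \<omega> s \<circ> \<omega> t)"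

definition compatible_endo :: "('a::ring_1 \<Rightarrow> 'a) \<Rightarrow> bool" where
  "compatible_endo \<sigma> \<longleftrightarrow> (\<forall>a b. a * b = 0 \<longleftrightarrow> a * \<sigma> b = 0)"

definition S_compatible :: "('b \<Rightarrow> 'a::ring_1 \<Rightarrow> 'a) \<Rightarrow> bool" where
  "S_compatible \<omega> \<longleftrightarrow> (\<forall>s. compatible_endo (\<omega> s))"

definition S_omega_Armendariz :: "('b::{monoid_mult,order} \<Rightarrow> 'a::ring_1 \<Rightarrow> 'a) \<Rightarrow> bool" where
  "S_omega_Armendariz \<omega> \<longleftrightarrow>
     (\<forall>f\<in>sgps. \<forall>g\<in>sgps. sgps_mult \<omega> f g = (\<lambda>_. 0) \<longrightarrow> (\<forall>s t. f s * \<omega> s (g t) = 0))"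

end

theory Submission
  imports Defs "HOL-Library.Ramsey"
begin

lemma good_seq:
  fixes x :: "nat \<Rightarrow> 'b::order"
  assumes art: "artinian_set X" and nar: "narrow_set X" and xin: "\<forall>i. x i \<in> X"
  shows "\<exists>H. infinite H \<and> (\<forall>i\<in>H. \<forall>j\<in>H. i<j \<longrightarrow> x i \<le> x j)"
proof -
  define c :: "nat set \<Rightarrow> nat" where
    "c P = (if x (Min P) \<le> x (Max P) then 0 else if x (Max P) < x (Min P) then 1 else 2)" for P
  have "\<forall>i\<in>(UNIV::nat set). \<forall>j\<in>UNIV. i \<noteq> j \<longrightarrow> c {i, j} < 3" by (simp add: c_def)
  from Ramsey2[OF infinite_UNIV_nat this] obtain Y t where
    Y: "infinite Y" "t < 3" "\<forall>i\<in>Y. \<forall>j\<in>Y. i\<noteq>j \<longrightarrow> c {i, j} = t" by blast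
  have ct: "c {i,j} = t" if "i \<in> Y" "j \<in> Y" "i < j" for i j using Y(3) that by auto
  have mm: "Min {i,j} = i" "Max {i,j} = j" if "i < (j::nat)" for i j using that by auto
  show ?thesis
  proof (cases "t = 0")
    case True
    have "x i \<le> x j" if "i \<in> Y" "j \<in> Y" "i < j" for i j
      using ct[OF that] mm[OF that(3)] True by (auto simp: c_def split: if_splits)
    then show ?thesis using Y(1) by blast
  next
    case False
    define e where "e = enumerate Y"
    have ein: "e n \<in> Y" for n using Y(1) by (simp add: e_def enumerate_in_set)
    have emono: "e n < e (Suc n)" for n using Y(1) by (simp add: e_def enumerate_mono)
    show ?thesis
    proof (cases "t = 1")
      case True
      have "x (e (Suc n)) < x (e n)" for n
      proof -
        have "c {e n, e (Suc n)} = 1" using ct[OF ein ein emono] True by simp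
        then show ?thesis using mm[OF emono] by (simp add: c_def split: if_splits)
      qed
      then have "\<exists>g::nat \<Rightarrow> 'b. \<forall>n. g n \<in> X \<and> g (Suc n) < g n"
        using xin by (intro exI[of _ "x \<circ> e"]) auto
      then show ?thesis using art by (simp add: artinian_set_def)
    next
      case False2: False
      with False Y(2) have t2: "t = 2" by auto
      have inc: "\<not> x i \<le> x j \<and> \<not> x j \<le> x i" if "i \<in> Y" "j \<in> Y" "i < j" for i j
        using ct[OF that] mm[OF that(3)] t2 by (auto simp: c_def split: if_splits)
      have inc2: "\<not> x i \<le> x j \<and> \<not> x j \<le> x i" if "i \<in> Y" "j \<in> Y" "i \<noteq> j" for i j
      proof (cases "i < j")
        case True then show ?thesis using inc that by blast
      next
        case False then have "j < i" using that(3) by simp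
        then show ?thesis using inc that by blast
      qed
      have "\<forall>a\<in>x ` Y. \<forall>b\<in>x ` Y. a \<noteq> b \<longrightarrow> \<not> a \<le> b \<and> \<not> b \<le> a"
        using inc2 by blast
      moreover have "x ` Y \<subseteq> X" using xin by auto
      ultimately have fin: "finite (x ` Y)" using nar by (simp add: narrow_set_def)
      have "inj_on x Y"
      proof (rule inj_onI)
        fix i j assume "i \<in> Y" "j \<in> Y" "x i = x j"
        then show "i = j" using inc2[of i j] by auto
      qed
      then have "finite Y" using fin finite_image_iff by blast
      then show ?thesis using Y(1) by simp
    qed
  qed
qed

lemma good2:
  fixes a b :: "nat \<Rightarrow> 'b::order"
  assumes "artinian_set A" "narrow_set A" "\<forall>i. a i \<in> A"
    and "artinian_set B" "narrow_set B" "\<forall>i. b i \<in> B"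
  shows "\<exists>i j. i < j \<and> a i \<le> a j \<and> b i \<le> b j"
proof -
  obtain H where H: "infinite H" "\<forall>i\<in>H. \<forall>j\<in>H. i<j \<longrightarrow> a i \<le> a j"
    using good_seq[OF assms(1-3)] by blast
  define e where "e = enumerate H"
  have ein: "e n \<in> H" for n using H(1) by (simp add: e_def enumerate_in_set)
  have emono: "i < j \<Longrightarrow> e i < e j" for i j using H(1) by (simp add: e_def enumerate_mono)
  obtain H2 where H2: "infinite H2" "\<forall>i\<in>H2. \<forall>j\<in>H2. i<j \<longrightarrow> b (e i) \<le> b (e j)"
    using good_seq[OF assms(4,5), of "b \<circ> e"] assms(6) by auto
  obtain i where i: "i \<in> H2" using H2(1) infinite_imp_nonempty by blast
  obtain j where j: "j \<in> H2" "j > i" using H2(1) unfolding infinite_nat_iff_unbounded by blast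
  show ?thesis
    using H(2) ein emono[OF j(2)] H2(2) i j by (intro exI[of _ "e i"] exI[of _ "e j"]) auto
qed

lemma so_props:
  assumes so: "strictly_ordered_monoid_wrt ((\<le>) :: 'b::{monoid_mult,order} \<Rightarrow> 'b \<Rightarrow> bool)"
  shows "\<And>u v t::'b. u \<le> v \<Longrightarrow> u*t \<le> v*t" "\<And>u v t::'b. u \<le> v \<Longrightarrow> t*u \<le> t*v"
    "\<And>u v t::'b. u < v \<Longrightarrow> u*t < v*t" "\<And>u v t::'b. u < v \<Longrightarrow> t*u < t*v"
proof -
  have A: "\<forall>u v t::'b. u \<le> v \<longrightarrow> u * t \<le> v * t \<and> t * u \<le> t * v"
    and B: "\<forall>u v t::'b. u \<le> v \<and> u \<noteq> v \<longrightarrow> (u * t \<le> v * t \<and> u * t \<noteq> v * t) \<and> (t * u \<le> t * v \<and> t * u \<noteq> t * v)"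
    using so unfolding strictly_ordered_monoid_wrt_def by blast+
  show "\<And>u v t::'b. u \<le> v \<Longrightarrow> u*t \<le> v*t" "\<And>u v t::'b. u \<le> v \<Longrightarrow> t*u \<le> t*v"
    using A by blast+
  show "\<And>u v t::'b. u < v \<Longrightarrow> u*t < v*t" "\<And>u v t::'b. u < v \<Longrightarrow> t*u < t*v"
    using B unfolding less_le by blast+
qed

lemma supp_art: "f \<in> sgps \<Longrightarrow> artinian_set (supp f)" by (simp add: sgps_def)
lemma supp_nar: "f \<in> sgps \<Longrightarrow> narrow_set (supp f)" by (simp add: sgps_def)

lemma fin_X:
  fixes f g :: "'b::{monoid_mult,order} \<Rightarrow> 'a::zero"
  assumes so: "strictly_ordered_monoid_wrt ((\<le>) :: 'b \<Rightarrow> 'b \<Rightarrow> bool)"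
    and f: "f \<in> sgps" and g: "g \<in> sgps"
  shows "finite {(u,v). u*v = s \<and> f u \<noteq> 0 \<and> g v \<noteq> 0}"
proof (rule ccontr)
  let ?S = "{(u,v). u*v = s \<and> f u \<noteq> 0 \<and> g v \<noteq> 0}"
  assume "infinite ?S"
  from infinite_countable_subset[OF this] obtain p :: "nat \<Rightarrow> 'b \<times> 'b" where p: "inj p" "range p \<subseteq> ?S"
    by (elim exE conjE)
  define a where "a = fst \<circ> p"
  define b where "b = snd \<circ> p"
  have ps: "a i * b i = s" "a i \<in> supp f" "b i \<in> supp g" for i
  proof -
    have "p i \<in> ?S" by (rule subsetD[OF p(2) rangeI])
    then show "a i * b i = s" "a i \<in> supp f" "b i \<in> supp g"
      by (cases "p i"; simp add: a_def b_def supp_def)+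
  qed
  have af: "\<forall>i. a i \<in> supp f" and bg: "\<forall>i. b i \<in> supp g" using ps by auto
  obtain i j where ij: "i < j" "a i \<le> a j" "b i \<le> b j"
    using good2[OF supp_art[OF f] supp_nar[OF f] af supp_art[OF g] supp_nar[OF g] bg] by blast
  have "p i \<noteq> p j" using ij(1) by (simp add: inj_eq[OF p(1)])
  then have ne: "a i \<noteq> a j \<or> b i \<noteq> b j" by (auto simp: a_def b_def prod_eq_iff)
  note sp = so_props[OF so]
  show False
  proof (cases "a i = a j")
    case True
    with ne ij have "b i < b j" by auto
    then have "a i * b i < a i * b j" by (rule sp(4))
    then show False using ps[of i] ps[of j] True by simp
  next
    case False
    with ij have "a i < a j" by auto
    then have "a i * b i < a j * b i" by (rule sp(3))
    also have "\<dots> \<le> a j * b j" using ij(3) by (rule sp(2))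
    finally show False using ps[of i] ps[of j] by simp
  qed
qed

lemma desc_lt:
  fixes s :: "nat \<Rightarrow> 'b::order"
  assumes "\<forall>n. s (Suc n) < s n" shows "i < j \<Longrightarrow> s j < s i"
proof (induction j)
  case 0 then show ?case by simp
next
  case (Suc j)
  have "s (Suc j) < s j" using assms by blast
  show ?case
  proof (cases "i = j")
    case True then show ?thesis using \<open>s (Suc j) < s j\<close> by simp
  next
    case False then have "i < j" using Suc.prems by simp
    then have "s j < s i" by (rule Suc.IH)
    then show ?thesis using \<open>s (Suc j) < s j\<close> by (rule order.strict_trans[rotated])
  qed
qed

lemma sub_sgps:
  assumes "g \<in> sgps" "supp f \<subseteq> supp g" shows "f \<in> sgps"
proof -
  have "artinian_set (supp f)" using assms unfolding sgps_def artinian_set_def by blast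
  moreover have "narrow_set (supp f)"
  proof -
    have "narrow_set (supp g)" using assms(1) by (simp add: sgps_def)
    then show ?thesis using assms(2) unfolding narrow_set_def by (meson subset_trans)
  qed
  ultimately show ?thesis by (simp add: sgps_def)
qed

lemma sub_set_sgps:
  assumes "supp f \<subseteq> P" "artinian_set P" "narrow_set P" shows "f \<in> sgps"
proof -
  have "artinian_set (supp f)" using assms unfolding artinian_set_def by blast
  moreover have "narrow_set (supp f)"
    using assms(1,3) unfolding narrow_set_def by (meson subset_trans)
  ultimately show ?thesis by (simp add: sgps_def)
qed

lemma prod_sgps:
  fixes f g :: "'b::{monoid_mult,order} \<Rightarrow> 'a::ring_1"
  assumes so: "strictly_ordered_monoid_wrt ((\<le>) :: 'b \<Rightarrow> 'b \<Rightarrow> bool)"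
    and f: "f \<in> sgps" and g: "g \<in> sgps"
  shows "sgps_mult \<omega> f g \<in> sgps"
proof -
  define P where "P = {u*v | u v. u \<in> supp f \<and> v \<in> supp g}"
  note sp = so_props[OF so]
  have dec: "\<exists>a b. \<forall>i. y i = a i * b i \<and> a i \<in> supp f \<and> b i \<in> supp g"
    if "\<forall>i. y i \<in> P" for y :: "nat \<Rightarrow> 'b"
  proof -
    have ex: "\<forall>i. \<exists>ab. y i = fst ab * snd ab \<and> fst ab \<in> supp f \<and> snd ab \<in> supp g"
      using that by (auto simp: P_def)
    then obtain ab where "\<forall>i. y i = fst (ab i) * snd (ab i) \<and> fst (ab i) \<in> supp f \<and> snd (ab i) \<in> supp g"
      using choice[OF ex] by blast
    then show ?thesis by (intro exI[of _ "fst \<circ> ab"] exI[of _ "snd \<circ> ab"]) simp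
  qed
  have goodP: "\<exists>i j. i < j \<and> y i \<le> y j" if yP: "\<forall>i. y i \<in> P" for y :: "nat \<Rightarrow> 'b"
  proof -
    obtain a b where ab: "\<forall>i. y i = a i * b i \<and> a i \<in> supp f \<and> b i \<in> supp g"
      using dec[OF yP] by blast
    have af: "\<forall>i. a i \<in> supp f" and bg: "\<forall>i. b i \<in> supp g" using ab by auto
    obtain i j where ij: "i < j" "a i \<le> a j" "b i \<le> b j"
      using good2[OF supp_art[OF f] supp_nar[OF f] af supp_art[OF g] supp_nar[OF g] bg] by blast
    have "a i * b i \<le> a j * b i" using ij(2) by (rule sp(1))
    also have "\<dots> \<le> a j * b j" using ij(3) by (rule sp(2))
    finally have le: "a i * b i \<le> a j * b j" .
    have "y i = a i * b i" "y j = a j * b j" using ab by blast+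
    then show ?thesis using le ij(1) by (intro exI[of _ i] exI[of _ j]) simp
  qed
  have art: "artinian_set P"
    unfolding artinian_set_def
  proof
    assume "\<exists>g::nat \<Rightarrow> 'b. \<forall>n. g n \<in> P \<and> g (Suc n) < g n"
    then obtain y :: "nat \<Rightarrow> 'b" where y: "\<forall>n. y n \<in> P" "\<forall>n. y (Suc n) < y n" by blast
    obtain i j where "i < j" "y i \<le> y j" using goodP[OF y(1)] by blast
    moreover have "y j < y i" using desc_lt[OF y(2)] \<open>i < j\<close> .
    ultimately show False by simp
  qed
  have nar: "narrow_set P"
    unfolding narrow_set_def
  proof (intro allI impI)
    fix Y assume Y: "Y \<subseteq> P" "\<forall>x\<in>Y. \<forall>y\<in>Y. x \<noteq> y \<longrightarrow> \<not> x \<le> y \<and> \<not> y \<le> x"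
    show "finite Y"
    proof (rule ccontr)
      assume "infinite Y"
      from infinite_countable_subset[OF this] obtain y :: "nat \<Rightarrow> 'b" where y: "inj y" "range y \<subseteq> Y"
        by (elim exE conjE)
      then have "\<forall>i. y i \<in> P" using Y(1) by auto
      then obtain i j where ij: "i < j" "y i \<le> y j" using goodP by blast
      have "y i \<noteq> y j" using ij(1) by (simp add: inj_eq[OF y(1)])
      moreover have "y i \<in> Y" "y j \<in> Y" using y(2) by auto
      ultimately show False using Y(2) ij(2) by blast
    qed
  qed
  have "supp (sgps_mult \<omega> f g) \<subseteq> P"
  proof
    fix s assume "s \<in> supp (sgps_mult \<omega> f g)"
    then have ne: "sgps_mult \<omega> f g s \<noteq> 0" by (simp add: supp_def)
    have "{(u, v). u * v = s \<and> f u \<noteq> 0 \<and> g v \<noteq> 0} \<noteq> {}"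
    proof
      assume E: "{(u, v). u * v = s \<and> f u \<noteq> 0 \<and> g v \<noteq> 0} = {}"
      have "sgps_mult \<omega> f g s = 0" unfolding sgps_mult_def E sum.empty ..
      with ne show False by simp
    qed
    then obtain u v where "u * v = s" "f u \<noteq> 0" "g v \<noteq> 0" by blast
    then show "s \<in> P" unfolding P_def supp_def by blast
  qed
  then show ?thesis using art nar by (rule sub_set_sgps)
qed

lemma hom_props:
  fixes \<omega> :: "'b::monoid_mult \<Rightarrow> 'a::ring_1 \<Rightarrow> 'a"
  assumes "monoid_hom_to_End \<omega>"
  shows "\<omega> s (a * b) = \<omega> s a * \<omega> s b" "\<omega> s (a + b) = \<omega> s a + \<omega> s b" "\<omega> s 0 = 0"
    "\<omega> 1 x = x" "\<omega> (s * t) x = \<omega> s (\<omega> t x)"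
proof -
  have e: "ring_endo (\<omega> s)" using assms by (simp add: monoid_hom_to_End_def)
  then show m: "\<omega> s (a * b) = \<omega> s a * \<omega> s b" "\<omega> s (a + b) = \<omega> s a + \<omega> s b"
    by (simp_all add: ring_endo_def)
  have "\<omega> s (0 + 0) = \<omega> s 0 + \<omega> s 0" using e unfolding ring_endo_def by blast
  then show "\<omega> s 0 = 0" by simp
  show "\<omega> 1 x = x" "\<omega> (s * t) x = \<omega> s (\<omega> t x)" using assms by (simp_all add: monoid_hom_to_End_def)
qed

lemma comp_iff:
  assumes "S_compatible \<omega>" shows "a * b = 0 \<longleftrightarrow> a * \<omega> s b = 0"
  using assms by (simp add: S_compatible_def compatible_endo_def)

lemma cA:
  fixes \<omega> :: "'b::monoid_mult \<Rightarrow> 'a::ring_1 \<Rightarrow> 'a"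
  assumes h: "monoid_hom_to_End \<omega>" and c: "S_compatible \<omega>" and z: "a * c' * b = 0"
  shows "a * \<omega> s c' * b = 0"
proof -
  have "a * (c' * b) = 0" using z by (simp add: mult.assoc)
  then have "a * \<omega> s (c' * b) = 0" using comp_iff[OF c] by blast
  then have "(a * \<omega> s c') * \<omega> s b = 0" by (simp add: hom_props[OF h] mult.assoc)
  then show ?thesis using comp_iff[OF c, of "a * \<omega> s c'" b s] by simp
qed

lemma cB:
  fixes \<omega> :: "'b::monoid_mult \<Rightarrow> 'a::ring_1 \<Rightarrow> 'a"
  assumes h: "monoid_hom_to_End \<omega>" and c: "S_compatible \<omega>" and z: "a * \<omega> s c' * b = 0"
  shows "a * c' * b = 0"
proof -
  have "(a * \<omega> s c') * \<omega> s b = 0" using z comp_iff[OF c, of "a * \<omega> s c'" b s] by simp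
  then have "a * \<omega> s (c' * b) = 0" by (simp add: hom_props[OF h] mult.assoc)
  then have "a * (c' * b) = 0" using comp_iff[OF c] by blast
  then show ?thesis by (simp add: mult.assoc)
qed

lemma zero_mult:
  fixes \<omega> :: "'b::monoid_mult \<Rightarrow> 'a::ring_1 \<Rightarrow> 'a"
  assumes c: "S_compatible \<omega>" and z: "\<forall>s t. f s * g t = 0"
  shows "sgps_mult \<omega> f g = (\<lambda>_. 0)"
proof
  fix s
  have "\<forall>x \<in> {(u, v). u * v = s \<and> f u \<noteq> 0 \<and> g v \<noteq> 0}. (case x of (u, v) \<Rightarrow> f u * \<omega> u (g v)) = 0"
  proof
    fix x assume "x \<in> {(u, v). u * v = s \<and> f u \<noteq> 0 \<and> g v \<noteq> 0}"
    obtain u v where x: "x = (u, v)" by (cases x)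
    have "f u * g v = 0" using z by blast
    then have "f u * \<omega> u (g v) = 0" using comp_iff[OF c] by blast
    then show "(case x of (u, v) \<Rightarrow> f u * \<omega> u (g v)) = 0" by (simp add: x)
  qed
  then show "sgps_mult \<omega> f g s = 0" unfolding sgps_mult_def by (rule sum.neutral)
qed

lemma ann_iff:
  fixes \<omega> :: "'b::{monoid_mult,order} \<Rightarrow> 'a::ring_1 \<Rightarrow> 'a"
  assumes c: "S_compatible \<omega>" and arm: "S_omega_Armendariz \<omega>" and f: "f \<in> sgps" and g: "g \<in> sgps"
  shows "sgps_mult \<omega> f g = (\<lambda>_. 0) \<longleftrightarrow> (\<forall>s t. f s * g t = 0)"
proof
  assume "sgps_mult \<omega> f g = (\<lambda>_. 0)"
  then have "\<forall>s t. f s * \<omega> s (g t) = 0" using arm f g by (simp add: S_omega_Armendariz_def)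
  then show "\<forall>s t. f s * g t = 0" using comp_iff[OF c] by blast
next
  assume "\<forall>s t. f s * g t = 0"
  then show "sgps_mult \<omega> f g = (\<lambda>_. 0)" by (rule zero_mult[OF c])
qed

definition delta :: "'a \<Rightarrow> 'b::monoid_mult \<Rightarrow> 'a::zero" where
  "delta r = (\<lambda>s. if s = 1 then r else 0)"

lemma delta_sgps: "(delta r :: 'b::{monoid_mult,order} \<Rightarrow> 'a::zero) \<in> sgps"
proof (rule sub_set_sgps[of _ "{1}"])
  show "supp (delta r) \<subseteq> {1}" by (auto simp: supp_def delta_def)
  show "artinian_set {1::'b}" unfolding artinian_set_def
  proof
    assume "\<exists>g::nat \<Rightarrow> 'b. \<forall>n. g n \<in> {1} \<and> g (Suc n) < g n"
    then obtain g :: "nat \<Rightarrow> 'b" where g: "\<forall>n. g n \<in> {1} \<and> g (Suc n) < g n" by blast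
    then have "g (Suc 0) < g 0" "g 0 \<in> {1}" "g (Suc 0) \<in> {1}" by blast+
    then show False by simp
  qed
  show "narrow_set {1::'b}" unfolding narrow_set_def by (auto intro: finite_subset)
qed

lemma delta_mult:
  fixes \<omega> :: "'b::monoid_mult \<Rightarrow> 'a::ring_1 \<Rightarrow> 'a"
  assumes h: "monoid_hom_to_End \<omega>"
  shows "sgps_mult \<omega> (delta e) g = (\<lambda>s. e * g s)"
proof
  fix s
  have S: "{(u, v). u * v = s \<and> delta e u \<noteq> 0 \<and> g v \<noteq> 0} = (if e \<noteq> 0 \<and> g s \<noteq> 0 then {(1, s)} else {})"
  proof (rule set_eqI)
    fix x :: "'b \<times> 'b"
    obtain u v where x: "x = (u, v)" by (cases x)
    show "x \<in> {(u, v). u * v = s \<and> delta e u \<noteq> 0 \<and> g v \<noteq> 0} \<longleftrightarrow> x \<in> (if e \<noteq> 0 \<and> g s \<noteq> 0 then {(1, s)} else {})"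
      by (auto simp: x delta_def)
  qed
  show "sgps_mult \<omega> (delta e) g s = e * g s"
    unfolding sgps_mult_def S by (auto simp: delta_def hom_props[OF h])
qed

lemma mult_delta:
  fixes \<omega> :: "'b::monoid_mult \<Rightarrow> 'a::ring_1 \<Rightarrow> 'a"
  assumes h: "monoid_hom_to_End \<omega>"
  shows "sgps_mult \<omega> f (delta r) u = f u * \<omega> u r"
proof -
  have S: "{(u', v). u' * v = u \<and> f u' \<noteq> 0 \<and> delta r v \<noteq> 0} = (if f u \<noteq> 0 \<and> r \<noteq> 0 then {(u, 1)} else {})"
  proof (rule set_eqI)
    fix x :: "'b \<times> 'b"
    obtain u' v where x: "x = (u', v)" by (cases x)
    show "x \<in> {(u', v). u' * v = u \<and> f u' \<noteq> 0 \<and> delta r v \<noteq> 0} \<longleftrightarrow> x \<in> (if f u \<noteq> 0 \<and> r \<noteq> 0 then {(u, 1)} else {})"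
      by (auto simp: x delta_def)
  qed
  show ?thesis
    unfolding sgps_mult_def S by (auto simp: delta_def hom_props[OF h])
qed

lemma armtrick:
  fixes \<omega> :: "'b::{monoid_mult,order} \<Rightarrow> 'a::ring_1 \<Rightarrow> 'a"
  assumes so: "strictly_ordered_monoid_wrt ((\<le>) :: 'b \<Rightarrow> 'b \<Rightarrow> bool)"
    and h: "monoid_hom_to_End \<omega>" and c: "S_compatible \<omega>" and arm: "S_omega_Armendariz \<omega>"
    and f: "f \<in> sgps" and k: "k \<in> sgps" and z: "\<forall>s. a * sgps_mult \<omega> f k s * b = 0"
  shows "a * f u * k v * b = 0"
proof -
  define p where "p = (\<lambda>u. a * f u)"
  define q where "q = (\<lambda>v. k v * \<omega> v b)"
  have p: "p \<in> sgps" by (rule sub_sgps[OF f]) (auto simp: supp_def p_def)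
  have q: "q \<in> sgps" by (rule sub_sgps[OF k]) (auto simp: supp_def q_def)
  have pq: "sgps_mult \<omega> p q = (\<lambda>_. 0)"
  proof
    fix s
    let ?A = "{(u, v). u * v = s \<and> p u \<noteq> 0 \<and> q v \<noteq> 0}"
    let ?B = "{(u, v). u * v = s \<and> f u \<noteq> 0 \<and> k v \<noteq> 0}"
    let ?T = "\<lambda>(u,v). p u * \<omega> u (q v)"
    have finB: "finite ?B" by (rule fin_X[OF so f k])
    have AB: "?A \<subseteq> ?B"
    proof
      fix x assume xA: "x \<in> ?A"
      obtain u v where x: "x = (u, v)" by (cases x)
      show "x \<in> ?B" using xA by (auto simp: x p_def q_def)
    qed
    have zero: "\<forall>x\<in>?B - ?A. ?T x = 0"
    proof
      fix x assume xB: "x \<in> ?B - ?A"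
      obtain u v where x: "x = (u, v)" by (cases x)
      from xB have "p u = 0 \<or> q v = 0" by (auto simp: x)
      then show "?T x = 0" by (auto simp: x hom_props[OF h])
    qed
    have "sgps_mult \<omega> p q s = sum ?T ?A" by (simp add: sgps_mult_def)
    also have "\<dots> = sum ?T ?B" by (rule sum.mono_neutral_left[OF finB AB zero])
    also have "\<dots> = sum (\<lambda>(u,v). a * (f u * \<omega> u (k v)) * \<omega> s b) ?B"
    proof (rule sum.cong[OF refl])
      fix x assume xB: "x \<in> ?B"
      obtain u v where x: "x = (u, v)" by (cases x)
      have uv: "u * v = s" using xB by (simp add: x)
      have "\<omega> u (\<omega> v b) = \<omega> s b" using uv by (simp add: hom_props[OF h, symmetric])
      then show "?T x = (\<lambda>(u,v). a * (f u * \<omega> u (k v)) * \<omega> s b) x"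
        by (simp add: x p_def q_def hom_props[OF h] mult.assoc)
    qed
    also have "\<dots> = a * sgps_mult \<omega> f k s * \<omega> s b"
      by (simp add: sgps_mult_def sum_distrib_left sum_distrib_right case_prod_unfold)
    also have "\<dots> = 0"
    proof -
      have "(a * sgps_mult \<omega> f k s) * b = 0" using z by simp
      then show ?thesis using comp_iff[OF c, of "a * sgps_mult \<omega> f k s" b s] by simp
    qed
    finally show "sgps_mult \<omega> p q s = 0" .
  qed
  have "\<forall>s t. p s * \<omega> s (q t) = 0" using arm p q pq unfolding S_omega_Armendariz_def by blast
  then have "p u * \<omega> u (q v) = 0" by blast
  then have "p u * q v = 0" using comp_iff[OF c] by blast
  then have "(a * f u * k v) * \<omega> v b = 0" by (simp add: p_def q_def mult.assoc)
  then show ?thesis using comp_iff[OF c, of "a * f u * k v" b v] by simp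
qed

lemma setpow_SS:
  "x \<in> setpow m X (Suc (Suc n)) \<longleftrightarrow> (\<exists>y z. x = m y z \<and> y \<in> X \<and> z \<in> setpow m X (Suc n))"
  by auto

lemma easy_dir:
  fixes \<omega> :: "'b::{monoid_mult,order} \<Rightarrow> 'a::ring_1 \<Rightarrow> 'a"
  assumes h: "monoid_hom_to_End \<omega>" and c: "S_compatible \<omega>"
    and CW: "\<forall>f\<in>Z. \<forall>s. f s \<in> W"
  shows "hh \<in> setpow (sgps_mult \<omega>) Z (Suc m) \<Longrightarrow> (\<forall>y\<in>setpow (*) W (Suc m). a * y * b = 0) \<Longrightarrow> a * hh s * b = 0"
proof (induction m arbitrary: hh s a b)
  case 0
  then show ?case using CW by simp
next
  case (Suc m)
  from Suc.prems(1) obtain f k where fk: "hh = sgps_mult \<omega> f k" "f \<in> Z" "k \<in> setpow (sgps_mult \<omega>) Z (Suc m)"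
    unfolding setpow_SS by blast
  let ?B = "{(u, v). u * v = s \<and> f u \<noteq> 0 \<and> k v \<noteq> 0}"
  have "a * hh s * b = (\<Sum>x\<in>?B. a * (case x of (u, v) \<Rightarrow> f u * \<omega> u (k v)) * b)"
    by (simp add: fk(1) sgps_mult_def sum_distrib_left sum_distrib_right)
  also have "\<dots> = 0"
  proof (rule sum.neutral, rule ballI)
    fix x assume "x \<in> ?B"
    obtain u v where x: "x = (u, v)" by (cases x)
    have "\<forall>z\<in>setpow (*) W (Suc m). (a * f u) * z * b = 0"
    proof
      fix z assume z: "z \<in> setpow (*) W (Suc m)"
      have "f u * z \<in> setpow (*) W (Suc (Suc m))" unfolding setpow_SS using z CW fk(2) by blast
      then have "a * (f u * z) * b = 0" using Suc.prems(2) by blast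
      then show "(a * f u) * z * b = 0" by (simp add: mult.assoc)
    qed
    then have "(a * f u) * k v * b = 0" using Suc.IH[OF fk(3)] by blast
    then have "(a * f u) * \<omega> u (k v) * b = 0" by (rule cA[OF h c])
    then show "a * (case x of (u, v) \<Rightarrow> f u * \<omega> u (k v)) * b = 0" by (simp add: x mult.assoc)
  qed
  finally show ?case .
qed

lemma hard_dir:
  fixes \<omega> :: "'b::{monoid_mult,order} \<Rightarrow> 'a::ring_1 \<Rightarrow> 'a"
  assumes so: "strictly_ordered_monoid_wrt ((\<le>) :: 'b \<Rightarrow> 'b \<Rightarrow> bool)"
    and h: "monoid_hom_to_End \<omega>" and c: "S_compatible \<omega>" and arm: "S_omega_Armendariz \<omega>"
    and Zs: "\<forall>m. setpow (sgps_mult \<omega>) Z (Suc m) \<subseteq> sgps"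
    and hyp: "\<And>a' b' T. (\<forall>f\<in>Z. \<forall>u z. z \<in> T \<longrightarrow> a' * f u * z * b' = 0) \<Longrightarrow> (\<forall>y\<in>W. \<forall>z\<in>T. a' * y * z * b' = 0)"
  shows "(\<forall>hh\<in>setpow (sgps_mult \<omega>) Z (Suc m). \<forall>s. a * hh s * b = 0) \<Longrightarrow> y \<in> setpow (*) W (Suc m) \<Longrightarrow> a * y * b = 0"
proof (induction m arbitrary: a b y)
  case 0
  have "\<forall>f\<in>Z. \<forall>u z. z \<in> {1} \<longrightarrow> a * f u * z * b = 0" using 0(1) by simp
  then have "\<forall>y\<in>W. \<forall>z\<in>{1}. a * y * z * b = 0" by (rule hyp)
  then show ?case using 0(2) by simp
next
  case (Suc m)
  have Zsg: "Z \<subseteq> sgps" using Zs[rule_format, of 0] by simp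
  from Suc.prems(2) obtain y1 z where yz: "y = y1 * z" "y1 \<in> W" "z \<in> setpow (*) W (Suc m)"
    unfolding setpow_SS by blast
  have "\<forall>f\<in>Z. \<forall>u z. z \<in> setpow (*) W (Suc m) \<longrightarrow> a * f u * z * b = 0"
  proof (intro ballI allI impI)
    fix f u z assume f: "f \<in> Z" and z: "z \<in> setpow (*) W (Suc m)"
    have "\<forall>k\<in>setpow (sgps_mult \<omega>) Z (Suc m). \<forall>v. (a * f u) * k v * b = 0"
    proof (intro ballI allI)
      fix k v assume k: "k \<in> setpow (sgps_mult \<omega>) Z (Suc m)"
      have "sgps_mult \<omega> f k \<in> setpow (sgps_mult \<omega>) Z (Suc (Suc m))" unfolding setpow_SS using f k by blast
      then have "\<forall>s. a * sgps_mult \<omega> f k s * b = 0" using Suc.prems(1) by blast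
      from armtrick[OF so h c arm _ _ this] f k Zsg Zs
      show "(a * f u) * k v * b = 0" by blast
    qed
    then show "a * f u * z * b = 0" using Suc.IH z by blast
  qed
  then have "\<forall>y\<in>W. \<forall>z\<in>setpow (*) W (Suc m). a * y * z * b = 0" by (rule hyp)
  then show ?case using yz by (simp add: mult.assoc)
qed

lemma final_eq:
  fixes \<omega> :: "'b::{monoid_mult,order} \<Rightarrow> 'a::ring_1 \<Rightarrow> 'a"
  assumes so: "strictly_ordered_monoid_wrt ((\<le>) :: 'b \<Rightarrow> 'b \<Rightarrow> bool)"
    and h: "monoid_hom_to_End \<omega>" and c: "S_compatible \<omega>" and arm: "S_omega_Armendariz \<omega>"
    and Zs: "\<forall>m. setpow (sgps_mult \<omega>) Z (Suc m) \<subseteq> sgps"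
    and CW: "\<forall>f\<in>Z. \<forall>s. f s \<in> W"
    and hyp: "\<And>a' b' T. (\<forall>f\<in>Z. \<forall>u z. z \<in> T \<longrightarrow> a' * f u * z * b' = 0) \<Longrightarrow> (\<forall>y\<in>W. \<forall>z\<in>T. a' * y * z * b' = 0)"
    and n: "n > 0" and ee: "e * e = e"
    and RW: "rann UNIV (*) 0 (setpow (*) W n) = {e * a | a. a \<in> UNIV}"
  shows "\<exists>n>0. \<exists>E\<in>sgps. sgps_mult \<omega> E E = E \<and>
           rann sgps (sgps_mult \<omega>) (\<lambda>_. 0) (setpow (sgps_mult \<omega>) Z n) = {sgps_mult \<omega> E a | a. a \<in> sgps}"
proof -
  obtain m where m: "n = Suc m" using n by (cases n) auto
  have key: "(\<forall>hh\<in>setpow (sgps_mult \<omega>) Z n. \<forall>s. hh s * b = 0) \<longleftrightarrow> (\<exists>a. b = e * a)" for b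
  proof
    assume H: "\<forall>hh\<in>setpow (sgps_mult \<omega>) Z n. \<forall>s. hh s * b = 0"
    have "\<forall>y\<in>setpow (*) W n. y * b = 0"
    proof
      fix y assume "y \<in> setpow (*) W n"
      then have "1 * y * b = 0" using hard_dir[OF so h c arm Zs hyp, of m 1 b y] H m by simp
      then show "y * b = 0" by simp
    qed
    then have "b \<in> rann UNIV (*) 0 (setpow (*) W n)" by (simp add: rann_def)
    then show "\<exists>a. b = e * a" using RW by blast
  next
    assume "\<exists>a. b = e * a"
    then have "b \<in> rann UNIV (*) 0 (setpow (*) W n)" using RW by blast
    then have Y: "\<forall>y\<in>setpow (*) W n. 1 * y * b = 0" by (simp add: rann_def)
    show "\<forall>hh\<in>setpow (sgps_mult \<omega>) Z n. \<forall>s. hh s * b = 0"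
    proof (intro ballI allI)
      fix hh s assume "hh \<in> setpow (sgps_mult \<omega>) Z n"
      then have "1 * hh s * b = 0" using easy_dir[OF h c CW, of hh m 1 b s] Y m by simp
      then show "hh s * b = 0" by simp
    qed
  qed
  define E where "E = (delta e :: 'b \<Rightarrow> 'a)"
  have Es: "E \<in> sgps" by (simp add: E_def delta_sgps)
  have EE: "sgps_mult \<omega> E E = E"
    unfolding E_def delta_mult[OF h] by (auto simp: delta_def ee)
  have "rann sgps (sgps_mult \<omega>) (\<lambda>_. 0) (setpow (sgps_mult \<omega>) Z n) = {sgps_mult \<omega> E a | a. a \<in> sgps}"
  proof (rule set_eqI)
    fix g
    show "g \<in> rann sgps (sgps_mult \<omega>) (\<lambda>_. 0) (setpow (sgps_mult \<omega>) Z n) \<longleftrightarrow> g \<in> {sgps_mult \<omega> E a | a. a \<in> sgps}"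
    proof
      assume g: "g \<in> rann sgps (sgps_mult \<omega>) (\<lambda>_. 0) (setpow (sgps_mult \<omega>) Z n)"
      then have gs: "g \<in> sgps" and gz: "\<forall>hh\<in>setpow (sgps_mult \<omega>) Z n. sgps_mult \<omega> hh g = (\<lambda>_. 0)"
        by (auto simp: rann_def)
      have "\<forall>hh\<in>setpow (sgps_mult \<omega>) Z n. \<forall>s t. hh s * g t = 0"
      proof
        fix hh assume hh: "hh \<in> setpow (sgps_mult \<omega>) Z n"
        then have "hh \<in> sgps" using Zs m by blast
        then show "\<forall>s t. hh s * g t = 0" using ann_iff[OF c arm _ gs] gz hh by blast
      qed
      then have "\<exists>a. g t = e * a" for t using key by blast
      then have "e * g t = g t" for t by (metis ee mult.assoc)
      then have "g = sgps_mult \<omega> E g" unfolding E_def delta_mult[OF h] by simp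
      then show "g \<in> {sgps_mult \<omega> E a | a. a \<in> sgps}" using gs by blast
    next
      assume "g \<in> {sgps_mult \<omega> E a | a. a \<in> sgps}"
      then obtain a where a: "a \<in> sgps" "g = sgps_mult \<omega> E a" by blast
      then have ga: "g = (\<lambda>s. e * a s)" unfolding E_def delta_mult[OF h] by simp
      have gs: "g \<in> sgps" by (rule sub_sgps[OF a(1)]) (auto simp: supp_def ga)
      have "\<forall>hh\<in>setpow (sgps_mult \<omega>) Z n. sgps_mult \<omega> hh g = (\<lambda>_. 0)"
      proof
        fix hh assume hh: "hh \<in> setpow (sgps_mult \<omega>) Z n"
        have "\<forall>s t. hh s * g t = 0" using key[of "g _"] hh ga by blast
        then show "sgps_mult \<omega> hh g = (\<lambda>_. 0)" by (rule zero_mult[OF c])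
      qed
      then show "g \<in> rann sgps (sgps_mult \<omega>) (\<lambda>_. 0) (setpow (sgps_mult \<omega>) Z n)"
        using gs by (simp add: rann_def)
    qed
  qed
  then show ?thesis using n Es EE by blast
qed

lemma setpow_closed_prod:
  fixes \<omega> :: "'b::{monoid_mult,order} \<Rightarrow> 'a::ring_1 \<Rightarrow> 'a"
  assumes so: "strictly_ordered_monoid_wrt ((\<le>) :: 'b \<Rightarrow> 'b \<Rightarrow> bool)" and X: "X \<subseteq> sgps"
  shows "setpow (sgps_mult \<omega>) X (Suc m) \<subseteq> sgps"
proof (induction m)
  case 0 then show ?case using X by simp
next
  case (Suc m)
  show ?case
  proof
    fix x assume "x \<in> setpow (sgps_mult \<omega>) X (Suc (Suc m))"
    then obtain y z where yz: "x = sgps_mult \<omega> y z" "y \<in> X" "z \<in> setpow (sgps_mult \<omega>) X (Suc m)"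
      unfolding setpow_SS by blast
    have "z \<in> sgps" using yz(3) Suc.IH by (rule subsetD[rotated])
    moreover have "y \<in> sgps" using yz(2) X by (rule subsetD[rotated])
    ultimately show "x \<in> sgps" unfolding yz(1) by (rule prod_sgps[OF so, rotated])
  qed
qed

lemma setpow_closed_ideal:
  assumes I: "I \<subseteq> C" "\<forall>x\<in>I. \<forall>r\<in>C. mult x r \<in> I"
  shows "setpow mult I (Suc m) \<subseteq> I"
proof (induction m)
  case 0 then show ?case by simp
next
  case (Suc m)
  show ?case
  proof
    fix x assume "x \<in> setpow mult I (Suc (Suc m))"
    then obtain y z where yz: "x = mult y z" "y \<in> I" "z \<in> setpow mult I (Suc m)"
      unfolding setpow_SS by blast
    have "z \<in> I" using yz(3) Suc.IH by (rule subsetD[rotated])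
    then have "z \<in> C" using I(1) by (rule subsetD[rotated])
    then show "x \<in> I" using I(2) yz(1,2) by simp
  qed
qed

theorem proposition3p6:
  fixes \<omega> :: "'b::{monoid_mult,order} \<Rightarrow> 'a::ring_1 \<Rightarrow> 'a"
  assumes "strictly_ordered_monoid_wrt ((\<le>) :: 'b \<Rightarrow> 'b \<Rightarrow> bool)"
    and "quasitotally_ordered ((\<le>) :: 'b \<Rightarrow> 'b \<Rightarrow> bool)"
    and "monoid_hom_to_End \<omega>"
    and "S_compatible \<omega>"
    and "S_omega_Armendariz \<omega>"
  shows "(gen_right_Baer TYPE('a) \<longrightarrow> gen_right_Baer_in sgps (sgps_mult \<omega>) (\<lambda>_. 0))
       \<and> (gen_right_quasi_Baer TYPE('a) \<longrightarrow>
            gen_right_quasi_Baer_in sgps (\<lambda>f g s. f s + g s) (\<lambda>f s. - f s) (sgps_mult \<omega>) (\<lambda>_. 0))"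
proof (intro conjI impI)
  note so = assms(1) and h = assms(3) and c = assms(4) and arm = assms(5)
  assume B: "gen_right_Baer TYPE('a)"
  show "gen_right_Baer_in sgps (sgps_mult \<omega>) (\<lambda>_. 0)"
    unfolding gen_right_Baer_in_def
  proof (intro allI impI)
    fix X :: "('b \<Rightarrow> 'a) set" assume X: "X \<subseteq> sgps \<and> X \<noteq> {}"
    define W where "W = {f s | f s. f \<in> X}"
    obtain f0 where f0: "f0 \<in> X" using X by blast
    have "f0 1 \<in> W" unfolding W_def using f0 by blast
    then have "W \<noteq> {}" by blast
    then have "\<exists>n>0. \<exists>e\<in>UNIV. e * e = e \<and> rann UNIV (*) 0 (setpow (*) W n) = {e * a | a. a \<in> UNIV}"
      using B unfolding gen_right_Baer_in_def by simp
    then obtain n e where ne: "n > 0" "e * e = e"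
      "rann UNIV (*) 0 (setpow (*) W n) = {e * a | a. a \<in> UNIV}"
      by blast
    have Zs: "\<forall>m. setpow (sgps_mult \<omega>) X (Suc m) \<subseteq> sgps"
      using setpow_closed_prod[OF so] X by blast
    have CW: "\<forall>f\<in>X. \<forall>s. f s \<in> W" unfolding W_def by blast
    have hyp: "\<forall>y\<in>W. \<forall>z\<in>T. a' * y * z * b' = 0"
      if "\<forall>f\<in>X. \<forall>u z. z \<in> T \<longrightarrow> a' * f u * z * b' = 0" for a' b' T
      using that unfolding W_def by blast
    show "\<exists>n>0. \<exists>E\<in>sgps. sgps_mult \<omega> E E = E \<and>
           rann sgps (sgps_mult \<omega>) (\<lambda>_. 0) (setpow (sgps_mult \<omega>) X n) = {sgps_mult \<omega> E a | a. a \<in> sgps}"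
      by (rule final_eq[OF so h c arm Zs CW hyp ne])
  qed
next
  note so = assms(1) and h = assms(3) and c = assms(4) and arm = assms(5)
  assume Q: "gen_right_quasi_Baer TYPE('a)"
  show "gen_right_quasi_Baer_in sgps (\<lambda>f g s. f s + g s) (\<lambda>f s. - f s) (sgps_mult \<omega>) (\<lambda>_. 0)"
    unfolding gen_right_quasi_Baer_in_def
  proof (intro allI impI)
    fix I :: "('b \<Rightarrow> 'a) set"
    assume I: "right_ideal_in sgps (\<lambda>f g s. f s + g s) (\<lambda>f s. - f s) (sgps_mult \<omega>) (\<lambda>_. 0) I"
    then have Isub: "I \<subseteq> sgps" and Imul: "\<forall>x\<in>I. \<forall>r\<in>sgps. sgps_mult \<omega> x r \<in> I"
      by (simp_all add: right_ideal_in_def)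
    define C where "C = {f s | f s. f \<in> I}"
    define W where "W = \<Inter>{K. right_ideal_in UNIV (+) uminus (*) (0::'a) K \<and> C \<subseteq> K}"
    have WI: "right_ideal_in UNIV (+) uminus (*) (0::'a) W"
      unfolding W_def right_ideal_in_def by auto
    have CsubW: "C \<subseteq> W" unfolding W_def by blast
    obtain n e where ne: "n > 0" "e * e = e"
      "rann UNIV (*) 0 (setpow (*) W n) = {e * a | a. a \<in> UNIV}"
      using Q WI unfolding gen_right_quasi_Baer_in_def by blast
    have Zs: "\<forall>m. setpow (sgps_mult \<omega>) I (Suc m) \<subseteq> sgps"
      using setpow_closed_ideal[OF Isub Imul] Isub by blast
    have CW: "\<forall>f\<in>I. \<forall>s. f s \<in> W" using CsubW by (auto simp: C_def)
    have hyp: "\<forall>y\<in>W. \<forall>z\<in>T. a' * y * z * b' = 0"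
      if pre: "\<forall>f\<in>I. \<forall>u z. z \<in> T \<longrightarrow> a' * f u * z * b' = 0" for a' b' T
    proof -
      define K where "K = {y. \<forall>r z. z \<in> T \<longrightarrow> a' * y * r * z * b' = 0}"
      have KI: "right_ideal_in UNIV (+) uminus (*) (0::'a) K"
        unfolding right_ideal_in_def
      proof (intro conjI ballI)
        show "K \<subseteq> UNIV" by simp
        show "0 \<in> K" by (simp add: K_def)
        fix x assume x: "x \<in> K"
        show "- x \<in> K" using x by (simp add: K_def)
        { fix y assume y: "y \<in> K"
          show "x + y \<in> K" using x y by (simp add: K_def distrib_left distrib_right) }
        { fix r0 :: 'a
          show "x * r0 \<in> K"
          proof -
            have "\<forall>r z. z \<in> T \<longrightarrow> a' * x * (r0 * r) * z * b' = 0" using x by (simp add: K_def)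
            then show ?thesis by (simp add: K_def mult.assoc)
          qed }
      qed
      have "C \<subseteq> K"
      proof
        fix y assume "y \<in> C"
        then obtain f u where fu: "y = f u" "f \<in> I" by (auto simp: C_def)
        show "y \<in> K" unfolding K_def
        proof (intro CollectI allI impI)
          fix r z assume z: "z \<in> T"
          have "sgps_mult \<omega> f (delta r) \<in> I" using Imul fu(2) delta_sgps by blast
          then have "a' * sgps_mult \<omega> f (delta r) u * z * b' = 0" using pre z by blast
          then have "(a' * f u) * \<omega> u r * (z * b') = 0" by (simp add: mult_delta[OF h] mult.assoc)
          then have "(a' * f u) * r * (z * b') = 0" by (rule cB[OF h c])
          then show "a' * y * r * z * b' = 0" by (simp add: fu(1) mult.assoc)
        qed
      qed
      then have "W \<subseteq> K" using KI unfolding W_def by blast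
      show ?thesis
      proof (intro ballI)
        fix y z assume y: "y \<in> W" and z: "z \<in> T"
        have "y \<in> K" using \<open>W \<subseteq> K\<close> y by (rule subsetD)
        then have "a' * y * 1 * z * b' = 0" using z unfolding K_def by blast
        then show "a' * y * z * b' = 0" by simp
      qed
    qed
    show "\<exists>n>0. \<exists>E\<in>sgps. sgps_mult \<omega> E E = E \<and>
           rann sgps (sgps_mult \<omega>) (\<lambda>_. 0) (setpow (sgps_mult \<omega>) I n) = {sgps_mult \<omega> E a | a. a \<in> sgps}"
      by (rule final_eq[OF so h c arm Zs CW hyp ne])
  qed
qed

end
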